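(* Let $a,d$ be real numbers, let $A_{n,k}(a,d)$ be the general Eulerian numbers and $T_n(t,a,d)$ the general Eulerian polynomials defined below, and let $A_j(t)$ be the classical Eulerian polynomials defined below. Then for every integer $n\ge 0$, $$T_n(t,a,d)=\sum_{k=-1}^{n-1}A_{n,k}(a,d)t^{k+1}=\sum_{j=0}^n\binom{n}{j}d^jA_j(t)(at-a)^{n-j}.$$
   Context: For real numbers $a,d$, the general Eulerian numbers $A_{n,k}(a,d)$ (integers $n\ge 0$, $k$) are defined by $A_{0,-1}(a,d)=1$, $A_{n,k}(a,d)=0$ whenever $k\ge n$ or $k\le -2$, and for $n\ge 1$, $-1\le k\le n-1$: $$A_{n,k}(a,d)=(-a+(k+2)d)A_{n-1,k}(a,d)+(a+(n-k-1)d)A_{n-1,k-1}(a,d).$$ The general Eulerian polynomials are $T_n(t,a,d)=\sum_{k=-1}^{n-1}A_{n,k}(a,d)t^{k+1}$ (so $T_0(t,a,d)=1$). The classical Eulerian polynomials are defined by $A_0(t)=1$ and $A_n(t)=\sum_{k=0}^{n-1}\binom{n}{k}A_k(t)(t-1)^{n-1-k}$ for $n\ge 1$. Also $x^0=1$ for all $x$. *)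

theory Defs
  imports Complex_Main
begin

fun genEulerA :: "nat \<Rightarrow> int \<Rightarrow> real \<Rightarrow> real \<Rightarrow> real" where
  "genEulerA 0 k a d = (if k = -1 then 1 else 0)"
| "genEulerA (Suc n) k a d =
     (if k \<ge> int (Suc n) \<or> k \<le> -2 then 0
      else (- a + (of_int k + 2) * d) * genEulerA n k a d
         + (a + (of_nat (Suc n) - of_int k - 1) * d) * genEulerA n (k - 1) a d)"

definition genEulerT :: "nat \<Rightarrow> real \<Rightarrow> real \<Rightarrow> real \<Rightarrow> real" where
  "genEulerT n t a d = (\<Sum>k\<in>{-1..int n - 1}. genEulerA n k a d * t ^ nat (k + 1))"

fun eulerPoly :: "nat \<Rightarrow> real \<Rightarrow> real" where
  "eulerPoly n t = (if n = 0 then 1 else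
     (\<Sum>k<n. real (n choose k) * eulerPoly k t * (t - 1) ^ (n - 1 - k)))"

end

theory Submission
  imports Defs
begin

declare eulerPoly.simps[simp del]

lemma A_zero: "k \<ge> int n \<or> k \<le> -2 \<Longrightarrow> genEulerA n k a d = 0"
  by (cases n) auto

definition cA :: "nat \<Rightarrow> nat \<Rightarrow> real \<Rightarrow> real \<Rightarrow> real" where
  "cA n m a d = genEulerA n (int m - 1) a d"

lemma cA_zero: "m \<ge> Suc n \<Longrightarrow> cA n m a d = 0"
  unfolding cA_def by (rule A_zero) auto

lemma cA_0: "cA (Suc n) 0 a d = (d - a) * cA n 0 a d"
  unfolding cA_def by (simp add: A_zero)

lemma cA_Suc: "cA (Suc n) (Suc m) a d =
   (- a + (real m + 2) * d) * cA n (Suc m) a d + (a + (real n - real m) * d) * cA n m a d"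
proof (cases "Suc m \<ge> Suc (Suc n)")
  case True
  then show ?thesis using cA_zero[of n "Suc m"] cA_zero[of n m] cA_zero[of "Suc n" "Suc m"] by simp
next
  case False
  then show ?thesis unfolding cA_def by (simp add: algebra_simps)
qed

definition TT :: "nat \<Rightarrow> real \<Rightarrow> real \<Rightarrow> real \<Rightarrow> real" where
  "TT n a d t = (\<Sum>m<Suc n. cA n m a d * t ^ m)"

definition DD :: "nat \<Rightarrow> real \<Rightarrow> real \<Rightarrow> real \<Rightarrow> real" where
  "DD n a d t = (\<Sum>m<Suc n. cA n m a d * (real m * t ^ (m - Suc 0)))"

lemma T_eq: "genEulerT n t a d = TT n a d t"
proof -
  have im: "{-1..int n - 1} = (\<lambda>m. int m - 1) ` {..<Suc n}"
  proof (rule set_eqI, rule iffI)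
    fix k assume "k \<in> {-1..int n - 1}"
    then show "k \<in> (\<lambda>m. int m - 1) ` {..<Suc n}"
      by (intro image_eqI[where x="nat (k+1)"]) auto
  qed auto
  have inj: "inj_on (\<lambda>m. int m - 1) {..<Suc n}" by (auto simp: inj_on_def)
  show ?thesis unfolding genEulerT_def TT_def im sum.reindex[OF inj]
    by (simp add: cA_def)
qed

lemma TT_ext: "N \<ge> Suc n \<Longrightarrow> TT n a d t = (\<Sum>m<N. cA n m a d * t ^ m)"
  unfolding TT_def by (rule sum.mono_neutral_left) (auto simp: cA_zero)

lemma DD_ext: "N \<ge> Suc n \<Longrightarrow> DD n a d t = (\<Sum>m<N. cA n m a d * (real m * t ^ (m - Suc 0)))"
  unfolding DD_def by (rule sum.mono_neutral_left) (auto simp: cA_zero)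

lemma TT_deriv: "((\<lambda>t. TT n a d t) has_real_derivative DD n a d t) (at t)"
  unfolding TT_def DD_def
  by (intro DERIV_sum DERIV_cmult DERIV_pow)

lemma tDD: "t * DD n a d t = (\<Sum>m<Suc n. real m * cA n m a d * t ^ m)"
  unfolding DD_def sum_distrib_left
  by (rule sum.cong) (auto simp: power_eq_if)

lemma TT_rec: "TT (Suc n) a d t = (d - a + (a + real n * d) * t) * TT n a d t + d * t * (1 - t) * DD n a d t"
proof -
  define P where "P = TT n a d t"
  define Q where "Q = (\<Sum>m<Suc n. real m * cA n m a d * t ^ m)"
  define g where "g m = (- a + (real m + 1) * d) * cA n m a d * t ^ m" for m
  have "TT (Suc n) a d t = cA (Suc n) 0 a d + (\<Sum>m<Suc n. cA (Suc n) (Suc m) a d * t ^ Suc m)"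
    unfolding TT_def by (subst sum.lessThan_Suc_shift) simp
  also have "\<dots> = (g 0 + (\<Sum>m<Suc n. g (Suc m))) + (\<Sum>m<Suc n. (a + (real n - real m) * d) * cA n m a d * t ^ Suc m)"
  proof -
    have "\<And>m. cA (Suc n) (Suc m) a d * t ^ Suc m = g (Suc m) + (a + (real n - real m) * d) * cA n m a d * t ^ Suc m"
      by (simp add: cA_Suc g_def algebra_simps)
    then show ?thesis by (simp add: cA_0 g_def sum.distrib)
  qed
  also have "g 0 + (\<Sum>m<Suc n. g (Suc m)) = (\<Sum>m<Suc (Suc n). g m)"
    by (subst sum.lessThan_Suc_shift) simp
  also have "\<dots> = (\<Sum>m<Suc n. g m)" by (simp add: g_def cA_zero)
  also have "\<dots> = (d - a) * P + d * Q"
    by (simp add: g_def P_def Q_def TT_def sum_distrib_left sum.distrib[symmetric] algebra_simps)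
  also have "(\<Sum>m<Suc n. (a + (real n - real m) * d) * cA n m a d * t ^ Suc m) = t * (a + real n * d) * P - d * t * Q"
    by (simp add: P_def Q_def TT_def sum_distrib_left sum_subtractf[symmetric] algebra_simps)
  finally show ?thesis using tDD[of t n a d] unfolding Q_def[symmetric] P_def
    by (simp add: algebra_simps)
qed


lemma pascal:
  fixes u :: "nat \<Rightarrow> real" and w :: real
  shows "(\<Sum>j\<le>Suc n. real (Suc n choose j) * u j * w ^ (Suc n - j))
     = w * (\<Sum>j\<le>n. real (n choose j) * u j * w ^ (n - j)) + (\<Sum>j\<le>n. real (n choose j) * u (Suc j) * w ^ (n - j))"
proof -
  have "(\<Sum>j\<le>Suc n. real (Suc n choose j) * u j * w ^ (Suc n - j))
      = u 0 * w ^ Suc n + (\<Sum>j\<le>n. real (n choose j) * u (Suc j) * w ^ (n - j))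
          + (\<Sum>j\<le>n. real (n choose Suc j) * u (Suc j) * w ^ (n - j))"
    by (subst sum.atMost_Suc_shift) (simp add: sum.distrib algebra_simps)
  moreover have "w * (\<Sum>j\<le>n. real (n choose j) * u j * w ^ (n - j))
      = (\<Sum>j\<le>Suc n. real (n choose j) * u j * w ^ (Suc n - j))"
    by (simp add: sum_distrib_left Suc_diff_le algebra_simps)
  moreover have "\<dots> = u 0 * w ^ Suc n + (\<Sum>j\<le>n. real (n choose Suc j) * u (Suc j) * w ^ (n - j))"
    by (subst sum.atMost_Suc_shift) simp
  ultimately show ?thesis by simp
qed

definition SS :: "nat \<Rightarrow> real \<Rightarrow> real \<Rightarrow> real \<Rightarrow> real" where
  "SS n a d t = (\<Sum>j\<le>n. real (n choose j) * d ^ j * TT j 0 1 t * (a * t - a) ^ (n - j))"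

lemma SS_deriv: "((\<lambda>t. SS n a d t) has_real_derivative
   (\<Sum>j\<le>n. real (n choose j) * d ^ j * (DD j 0 1 t * (a * t - a) ^ (n - j)
      + TT j 0 1 t * (real (n - j) * (a * t - a) ^ (n - j - 1) * a)))) (at t)"
  unfolding SS_def
  by (auto intro!: derivative_eq_intros TT_deriv simp: algebra_simps)

lemma E_rec: "TT (Suc j) 0 1 t = (1 + real j * t) * TT j 0 1 t + t * (1 - t) * DD j 0 1 t"
  using TT_rec[of j 0 1 t] by simp

lemma main: "TT n a d t = SS n a d t"
proof (induction n arbitrary: a d t)
  case 0
  then show ?case by (simp add: TT_def SS_def cA_def)
next
  case (Suc n)
  have fe: "(\<lambda>t. TT n a d t) = (\<lambda>t. SS n a d t)" using Suc by auto
  define y where "y = a * t - a"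
  define E where "E j = TT j 0 1 t" for j
  define D where "D j = DD j 0 1 t" for j
  have DDeq: "DD n a d t = (\<Sum>j\<le>n. real (n choose j) * d ^ j * (D j * y ^ (n - j)
      + E j * (real (n - j) * y ^ (n - j - 1) * a)))"
    using DERIV_unique[OF TT_deriv[of n a d t] SS_deriv[of n a d t, folded fe]]
    unfolding y_def E_def D_def .
  have tm: "d * t * (1 - t) * (real (n choose j) * d ^ j * (D j * y ^ (n - j)
      + E j * (real (n - j) * y ^ (n - j - 1) * a)))
      = real (n choose j) * d ^ Suc j * E (Suc j) * y ^ (n - j)
        - d * (1 + real n * t) * (real (n choose j) * d ^ j * E j * y ^ (n - j))" if "j \<le> n" for j
  proof -
    have 1: "t * (1 - t) * D j = E (Suc j) - (1 + real j * t) * E j"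
      using E_rec[of j t] unfolding E_def D_def by simp
    have 2: "real (n - j) * y ^ (n - j - 1) * a * (1 - t) = - real (n - j) * y ^ (n - j)"
    proof (cases "n - j")
      case (Suc k) then show ?thesis by (simp add: y_def algebra_simps)
    qed simp
    have 3: "real j + real (n - j) = real n" using that by simp
    have "d * t * (1 - t) * (real (n choose j) * d ^ j * (D j * y ^ (n - j)
      + E j * (real (n - j) * y ^ (n - j - 1) * a)))
      = real (n choose j) * d ^ Suc j * (y ^ (n - j) * (t * (1 - t) * D j)
        + t * E j * (real (n - j) * y ^ (n - j - 1) * a * (1 - t)))"
      by (simp add: algebra_simps)
    also have "\<dots> = real (n choose j) * d ^ Suc j * (y ^ (n - j) * (E (Suc j) - (1 + real j * t) * E j)
        - t * E j * real (n - j) * y ^ (n - j))"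
      unfolding 1 2 by (simp add: algebra_simps)
    also have "\<dots> = real (n choose j) * d ^ Suc j * E (Suc j) * y ^ (n - j)
        - d * (1 + (real j + real (n - j)) * t) * (real (n choose j) * d ^ j * E j * y ^ (n - j))"
      by (simp add: algebra_simps)
    finally show ?thesis unfolding 3 .
  qed
  have SSn: "SS n a d t = (\<Sum>j\<le>n. real (n choose j) * d ^ j * E j * y ^ (n - j))"
    unfolding SS_def E_def y_def ..
  have "TT (Suc n) a d t = (d - a + (a + real n * d) * t) * SS n a d t + d * t * (1 - t) * DD n a d t"
    using TT_rec Suc by simp
  also have "d * t * (1 - t) * DD n a d t
     = (\<Sum>j\<le>n. real (n choose j) * d ^ Suc j * E (Suc j) * y ^ (n - j)) - d * (1 + real n * t) * SS n a d t"
    unfolding DDeq sum_distrib_left SSn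
    by (subst sum.cong[OF refl tm], simp, simp only: sum_subtractf)
  finally have "TT (Suc n) a d t = y * SS n a d t + (\<Sum>j\<le>n. real (n choose j) * d ^ Suc j * E (Suc j) * y ^ (n - j))"
    by (simp add: y_def algebra_simps)
  also have "\<dots> = SS (Suc n) a d t"
    using pascal[of n "\<lambda>j. d ^ j * E j" y]
    unfolding SSn by (simp add: SS_def E_def y_def mult.assoc)
  finally show ?case .
qed


lemma shiftA: "n \<ge> 1 \<Longrightarrow> genEulerA n k 1 1 = genEulerA n (k - 1) 0 1"
proof (induction n arbitrary: k)
  case 0 then show ?case by simp
next
  case (Suc n)
  show ?case
  proof (cases "n = 0")
    case True
    then show ?thesis by (cases "k = -1 \<or> k = 0 \<or> k = 1") auto
  next
    case False
    then have IH: "\<And>k. genEulerA n k 1 1 = genEulerA n (k - 1) 0 1" using Suc by simp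
    consider "k = int n + 1" | "k = -1" | "k \<noteq> int n + 1 \<and> k \<noteq> -1" by blast
    then show ?thesis
    proof cases
      case 1 then show ?thesis using A_zero[of n "int n" 0 1] by simp
    next
      case 2 then show ?thesis using A_zero[of n "-2" 1 1] by simp
    next
      case 3 then show ?thesis using IH[of k] IH[of "k - 1"]
        by (auto simp: algebra_simps)
    qed
  qed
qed

lemma TT_11: "n \<ge> 1 \<Longrightarrow> TT n 1 1 t = t * TT n 0 1 t"
proof -
  assume n: "n \<ge> 1"
  have z: "cA n n 0 1 = 0"
    using shiftA[OF n, of "int n"] A_zero[of n "int n" 1 1] unfolding cA_def by simp
  have c: "cA n (Suc m) 1 1 = cA n m 0 1" for m
    using shiftA[OF n, of "int (Suc m) - 1"] unfolding cA_def by (simp add: algebra_simps)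
  have c0: "cA n 0 1 1 = 0" unfolding cA_def using shiftA[OF n, of "-1"] A_zero[of n "-2" 0 1] by simp
  have "TT n 1 1 t = (\<Sum>m<n. cA n m 0 1 * t ^ Suc m)"
    unfolding TT_def by (subst sum.lessThan_Suc_shift) (simp add: c c0)
  also have "\<dots> = t * TT n 0 1 t"
    unfolding TT_def by (simp add: z sum_distrib_left algebra_simps)
  finally show ?thesis .
qed

lemma TT_cont: "isCont (\<lambda>t. TT k a d t) x"
  using DERIV_isCont[OF TT_deriv] .

lemma cont_eq:
  fixes f g :: "real \<Rightarrow> real"
  assumes "isCont f x" "isCont g x" "\<And>y. y \<noteq> x \<Longrightarrow> f y = g y"
  shows "f x = g x"
proof -
  have "f \<midarrow>x\<rightarrow> f x" using assms(1) isCont_def by blast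
  then have "g \<midarrow>x\<rightarrow> f x" using LIM_equal[of x f g] assms(3) by blast
  moreover have "g \<midarrow>x\<rightarrow> g x" using assms(2) isCont_def by blast
  ultimately show ?thesis using LIM_unique by blast
qed

lemma euler_eq: "eulerPoly n t = TT n 0 1 t"
proof (induction n arbitrary: t rule: less_induct)
  case (less n)
  show ?case
  proof (cases "n = 0")
    case True
    then show ?thesis by (subst eulerPoly.simps) (simp add: TT_def cA_def)
  next
    case False
    define X where "X t = (\<Sum>k<n. real (n choose k) * TT k 0 1 t * (t - 1) ^ (n - 1 - k))" for t
    have eX: "eulerPoly n t = X t" for t
      using False less unfolding X_def
      by (subst eulerPoly.simps) (auto intro!: sum.cong)
    have key: "(t - 1) * X t = (t - 1) * TT n 0 1 t" for t
    proof -
      have "(t - 1) * X t = (\<Sum>k<n. real (n choose k) * TT k 0 1 t * (t - 1) ^ (n - k))"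
        unfolding X_def sum_distrib_left
        by (rule sum.cong) (auto simp: power_eq_if Suc_diff_Suc algebra_simps
             intro: arg_cong[where f="\<lambda>e. _ * (t - 1) ^ e"])
      also have "\<dots> = TT n 1 1 t - TT n 0 1 t"
        using main[of n 1 1 t] unfolding SS_def
        by (simp add: lessThan_Suc_atMost[symmetric])
      also have "\<dots> = (t - 1) * TT n 0 1 t"
        using TT_11[of n t] False by (simp add: algebra_simps)
      finally show ?thesis .
    qed
    have XE: "X y = TT n 0 1 y" if "y \<noteq> 1" for y using key[of y] that by simp
    have "X 1 = TT n 0 1 1"
      by (rule cont_eq[where f=X and g="\<lambda>t. TT n 0 1 t" and x=1])
        (auto simp: XE TT_cont, unfold X_def, auto intro!: continuous_intros TT_cont)
    then show ?thesis using eX XE by (cases "t = 1") auto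
  qed
qed

theorem lemma3p2:
  fixes a d t :: real and n :: nat
  shows "genEulerT n t a d = (\<Sum>k\<in>{-1..int n - 1}. genEulerA n k a d * t ^ nat (k + 1))
       \<and> genEulerT n t a d
         = (\<Sum>j=0..n. real (n choose j) * d ^ j * eulerPoly j t * (a * t - a) ^ (n - j))"
proof
  show "genEulerT n t a d = (\<Sum>k\<in>{-1..int n - 1}. genEulerA n k a d * t ^ nat (k + 1))"
    by (simp add: genEulerT_def)
  show "genEulerT n t a d
         = (\<Sum>j=0..n. real (n choose j) * d ^ j * eulerPoly j t * (a * t - a) ^ (n - j))"
  proof -
    have "genEulerT n t a d = SS n a d t" using T_eq[of n t a d] main[of n a d t] by simp
    also have "\<dots> = (\<Sum>j=0..n. real (n choose j) * d ^ j * eulerPoly j t * (a * t - a) ^ (n - j))"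
      unfolding SS_def atLeast0AtMost by (simp only: euler_eq)
    finally show ?thesis .
  qed
qed

end
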